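(* Let $L_s, L_t \ge 0$ be integers, let $N_p, N_c \ge 1$ be integers, and for $1\le p\le N_p$, $1\le q\le N_c$ let $\tilde f_T(p)$, $f_d(\psi_{p,q})$, $f_R(\psi_{p,q})$ be real numbers and $\sigma^2_{p,q} \ge 0$; let $\sigma_n^2\ge 0$. For a real $f$ and integers $L\ge 0$, $0\le l\le L$, define $\mathbf{g}^{(L)}_{l}(f) = [e^{\mathrm{j}2\pi f(0-l)}, e^{\mathrm{j}2\pi f(1-l)},\ldots,e^{\mathrm{j}2\pi f(L-l)}]^T \in \mathbb{C}^{(L+1)\times 1}$, and let $\mathbf{e}^{(L)}_{l}\in\mathbb{C}^{(L+1)\times 1}$ be the vector with a $1$ in position $l$ (positions indexed $0,\ldots,L$) and zeros elsewhere. Set $\breve{\mathbf{a}}_{T,l_1}(p)=\mathbf{g}^{(L_s)}_{l_1}(\tilde f_T(p))$, $\breve{\mathbf{b}}_{l_2}(p,q)=\mathbf{g}^{(L_t)}_{l_2}(f_d(\psi_{p,q}))$, $\breve{\mathbf{a}}_{R,l_3}(p,q)=\mathbf{g}^{(L_s)}_{l_3}(f_R(\psi_{p,q}))$, and for $0\le l_1\le L_s$, $0\le l_2\le L_t$, $0\le l_3\le L_s$ define $$\mathbf{z}_{l_1,l_2,l_3}=\sum_{p=1}^{N_p}\sum_{q=1}^{N_c}\sigma^2_{p,q}\,\breve{\mathbf{a}}_{T,l_1}(p)\otimes\breve{\mathbf{b}}_{l_2}(p,q)\otimes\breve{\mathbf{a}}_{R,l_3}(p,q)+\sigma_n^2\,\mathbf{e}^{(L_s)}_{l_1}\otimes\mathbf{e}^{(L_t)}_{l_2}\otimes\mathbf{e}^{(L_s)}_{l_3},$$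 and $\mathbf{R}_v=\sum_{l_1=0}^{L_s}\sum_{l_2=0}^{L_t}\sum_{l_3=0}^{L_s}\mathbf{z}_{l_1,l_2,l_3}\mathbf{z}_{l_1,l_2,l_3}^H$. Let $\breve{\mathbf{v}}_{0,0,0}(p,q)=\breve{\mathbf{a}}_{T,0}(p)\otimes\breve{\mathbf{b}}_{0}(p,q)\otimes\breve{\mathbf{a}}_{R,0}(p,q)$. Then $$\mathbf{R}_v = C^2\Big(\sum_{p=1}^{N_p}\sum_{q=1}^{N_c}\sigma^2_{p,q}\,\breve{\mathbf{v}}_{0,0,0}(p,q)\breve{\mathbf{v}}_{0,0,0}^H(p,q)+\sigma_n^2\mathbf{I}\Big)^2,$$ where $C$ is a constant and $\mathbf{I}$ is the identity of size $(L_s+1)^2(L_t+1)$.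
   Context: $\otimes$ denotes the Kronecker product, $(\cdot)^H$ the conjugate transpose, and $\mathrm{j}=\sqrt{-1}$. The vectors $\mathbf{z}_{l_1,l_2,l_3}$ are the 3-D spatially smoothed subvectors of a virtual (difference-coarray) space-time-range snapshot built from the clutter covariance of a co-prime frequency diverse array radar, with $\tilde f_T(p)$ the compensated transmit (range) frequency of the $p$-th ambiguous range region, $f_d$ the Doppler frequency and $f_R$ the receive spatial frequency of clutter patch $(p,q)$, $\sigma_{p,q}^2$ the clutter patch power and $\sigma_n^2$ the noise power. *)

theory Defs
  imports Complex_Main
begin

text \<open>Vectors of length n are functions nat => complex, meaningful on indices 0..n-1;
  n x m matrices are functions nat => nat => complex, meaningful on indices i<n, j<m.\<close>

definition steer :: "nat \<Rightarrow> nat \<Rightarrow> real \<Rightarrow> nat \<Rightarrow> complex" where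
  "steer L l f = (\<lambda>k. if k \<le> L then cis (2 * pi * f * (real k - real l)) else 0)"

definition unitvec :: "nat \<Rightarrow> nat \<Rightarrow> nat \<Rightarrow> complex" where
  "unitvec L l = (\<lambda>k. if k \<le> L \<and> k = l then 1 else 0)"

definition kron :: "nat \<Rightarrow> (nat \<Rightarrow> complex) \<Rightarrow> (nat \<Rightarrow> complex) \<Rightarrow> nat \<Rightarrow> complex" where
  "kron m u v = (\<lambda>i. u (i div m) * v (i mod m))"

definition outer :: "(nat \<Rightarrow> complex) \<Rightarrow> (nat \<Rightarrow> complex) \<Rightarrow> nat \<Rightarrow> nat \<Rightarrow> complex" where
  "outer u v = (\<lambda>i j. u i * cnj (v j))"

definition mmult :: "nat \<Rightarrow> (nat \<Rightarrow> nat \<Rightarrow> complex) \<Rightarrow> (nat \<Rightarrow> nat \<Rightarrow> complex) \<Rightarrow> nat \<Rightarrow> nat \<Rightarrow> complex" where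
  "mmult n A B = (\<lambda>i j. \<Sum>k<n. A i k * B k j)"

definition idm :: "nat \<Rightarrow> nat \<Rightarrow> complex" where
  "idm = (\<lambda>i j. if i = j then 1 else 0)"

definition kron3 :: "nat \<Rightarrow> nat \<Rightarrow> (nat \<Rightarrow> complex) \<Rightarrow> (nat \<Rightarrow> complex) \<Rightarrow> (nat \<Rightarrow> complex) \<Rightarrow> nat \<Rightarrow> complex" where
  "kron3 Ls Lt a b c = kron ((Lt + 1) * (Ls + 1)) a (kron (Ls + 1) b c)"

end

theory Submission imports Defs begin

lemma sum_split_mult:
  fixes g :: "nat \<Rightarrow> 'a::comm_monoid_add"
  shows "(\<Sum>k<a*b. g k) = (\<Sum>i<a. \<Sum>j<b. g (i*b + j))"
proof (induction a)
  case 0 then show ?case by simp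
next
  case (Suc a)
  have "(\<Sum>k<Suc a*b. g k) = (\<Sum>k<a*b. g k) + (\<Sum>k\<in>{a*b..<a*b+b}. g k)"
    by (simp add: sum.atLeastLessThan_concat[symmetric] lessThan_atLeast0 add.commute)
  also have "(\<Sum>k\<in>{a*b..<a*b+b}. g k) = (\<Sum>j<b. g (a*b + j))"
    using sum.shift_bounds_nat_ivl[of g 0 "a*b" b] by (simp add: lessThan_atLeast0 add.commute)
  finally show ?case using Suc by simp
qed

lemma steer_factor:
  assumes "l \<le> L"
  shows "steer L l f k = steer L 0 f k * cnj (steer L 0 f l)"
  using assms by (simp add: steer_def cis_cnj cis_mult algebra_simps)

lemma mod_mod_gen: "(i::nat) mod (T*S) mod S = i mod S"
  by (metis mod_mod_cancel dvd_triv_right)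

lemma kron3_eval:
  "kron3 Ls Lt a b c i = a (i div ((Lt+1)*(Ls+1))) * b ((i mod ((Lt+1)*(Ls+1))) div (Ls+1)) * c (i mod (Ls+1))"
  unfolding kron3_def kron_def mod_mod_gen by (simp only: mult.assoc)

lemma enc_dec_gen:
  fixes l1 l2 l3 S T :: nat
  assumes "l2 < T" "l3 < S"
  shows "(l1*(T*S) + (l2*S + l3)) div (T*S) = l1" "((l1*(T*S) + (l2*S + l3)) mod (T*S)) div S = l2"
     "(l1*(T*S) + (l2*S + l3)) mod S = l3"
proof -
  have a: "l2*S + l3 < T*S"
  proof -
    have "l2*S + l3 < l2*S + S" using assms by simp
    also have "\<dots> = (l2+1)*S" by simp
    also have "\<dots> \<le> T*S" using assms by (intro mult_right_mono) auto
    finally show ?thesis .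
  qed
  have TS: "T*S > 0" using assms by simp
  have "(l1*(T*S) + (l2*S + l3)) div (T*S) = l1 + (l2*S + l3) div (T*S)"
    using TS by (simp add: add.commute)
  then show "(l1*(T*S) + (l2*S + l3)) div (T*S) = l1" using a by simp
  have "(l1*(T*S) + (l2*S + l3)) mod (T*S) = l2*S + l3" using a by (simp add: add.commute)
  then show "((l1*(T*S) + (l2*S + l3)) mod (T*S)) div S = l2" using assms by simp
  have "(l1*(T*S) + (l2*S + l3)) mod S = ((l1*T + l2)*S + l3) mod S"
    by (simp add: algebra_simps)
  then show "(l1*(T*S) + (l2*S + l3)) mod S = l3" using assms by simp
qed

lemma dec_enc_gen:
  fixes i S T R :: nat
  assumes "i < R*(T*S)"
  shows "i div (T*S) < R" "(i mod (T*S)) div S < T" "i mod S < S"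
    "i = (i div (T*S))*(T*S) + (((i mod (T*S)) div S)*S + i mod S)"
proof -
  show "i div (T*S) < R" using assms by (rule less_mult_imp_div_less)
  have "T*S > 0" using assms by (cases "T*S") auto
  then have "S > 0" by simp
  then show "i mod S < S" by simp
  have "i mod (T*S) < T*S" using \<open>T*S > 0\<close> by simp
  then show "(i mod (T*S)) div S < T" using \<open>S > 0\<close>
    by (simp add: div_less_iff_less_mult)
  have "i = (i div (T*S))*(T*S) + i mod (T*S)" by (rule div_mult_mod_eq[symmetric])
  also have "i mod (T*S) = ((i mod (T*S)) div S)*S + i mod (T*S) mod S" by (rule div_mult_mod_eq[symmetric])
  finally show "i = (i div (T*S))*(T*S) + (((i mod (T*S)) div S)*S + i mod S)"
    unfolding mod_mod_gen .
qed

theorem theorem1: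
  fixes Ls Lt Np Nc :: nat
    and fT :: "nat \<Rightarrow> real"
    and fd fR sig2 :: "nat \<Rightarrow> nat \<Rightarrow> real"
    and sign2 :: real
    and z :: "nat \<Rightarrow> nat \<Rightarrow> nat \<Rightarrow> nat \<Rightarrow> complex"
    and Rv :: "nat \<Rightarrow> nat \<Rightarrow> complex"
    and v0 :: "nat \<Rightarrow> nat \<Rightarrow> nat \<Rightarrow> complex"
    and M :: "nat \<Rightarrow> nat \<Rightarrow> complex"
  assumes "Np \<ge> 1" and "Nc \<ge> 1"
    and "\<forall>p\<in>{1..Np}. \<forall>q\<in>{1..Nc}. sig2 p q \<ge> 0"
    and "sign2 \<ge> 0"
    and z_def: "\<And>l1 l2 l3. z l1 l2 l3 =
        (\<lambda>i. (\<Sum>p=1..Np. \<Sum>q=1..Nc. complex_of_real (sig2 p q) *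
              kron3 Ls Lt (steer Ls l1 (fT p)) (steer Lt l2 (fd p q)) (steer Ls l3 (fR p q)) i)
            + complex_of_real sign2 * kron3 Ls Lt (unitvec Ls l1) (unitvec Lt l2) (unitvec Ls l3) i)"
    and Rv_def: "Rv = (\<lambda>i j. \<Sum>l1\<in>{0..Ls}. \<Sum>l2\<in>{0..Lt}. \<Sum>l3\<in>{0..Ls}.
                          outer (z l1 l2 l3) (z l1 l2 l3) i j)"
    and v0_def: "\<And>p q. v0 p q = kron3 Ls Lt (steer Ls 0 (fT p)) (steer Lt 0 (fd p q)) (steer Ls 0 (fR p q))"
    and M_def: "M = (\<lambda>i j. (\<Sum>p=1..Np. \<Sum>q=1..Nc. complex_of_real (sig2 p q) * outer (v0 p q) (v0 p q) i j)
                         + complex_of_real sign2 * idm i j)"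
  shows "\<exists>C::real. \<forall>i < (Ls + 1)^2 * (Lt + 1). \<forall>j < (Ls + 1)^2 * (Lt + 1).
           Rv i j = complex_of_real (C^2) * mmult ((Ls + 1)^2 * (Lt + 1)) M M i j"
proof -
  define S where "S = Ls + 1"
  define T where "T = Lt + 1"
  define enc where "enc = (\<lambda>l1 l2 l3. l1*(T*S) + (l2*S + l3))"
  have Sp: "S > 0" "T > 0" by (simp_all add: S_def T_def)
  have Neq: "(Ls + 1)^2 * (Lt + 1) = S*(T*S)" by (simp add: S_def T_def power2_eq_square algebra_simps)
  have ivl: "{0..n} = {..<n+1}" for n :: nat by auto
  have dec: "enc l1 l2 l3 div ((Lt+1)*(Ls+1)) = l1" "(enc l1 l2 l3 mod ((Lt+1)*(Ls+1))) div (Ls+1) = l2"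
     "enc l1 l2 l3 mod (Ls+1) = l3" if "l2 \<le> Lt" "l3 \<le> Ls" for l1 l2 l3
    using enc_dec_gen[of l2 T l3 S l1] that unfolding enc_def S_def T_def by auto
  have Mdef': "M i j = (\<Sum>p=1..Np. \<Sum>q=1..Nc. complex_of_real (sig2 p q) * (v0 p q i * cnj (v0 p q j)))
                         + complex_of_real sign2 * idm i j" for i j
    by (simp add: M_def outer_def)
  have Msym: "cnj (M j k) = M k j" for j k
    unfolding Mdef' by (simp add: idm_def mult.commute)
  have zM: "z l1 l2 l3 i = M i (enc l1 l2 l3)"
    if i: "i < S*(T*S)" and l: "l1 \<le> Ls" "l2 \<le> Lt" "l3 \<le> Ls" for i l1 l2 l3
  proof -
    have v0e: "v0 p q (enc l1 l2 l3) = steer Ls 0 (fT p) l1 * steer Lt 0 (fd p q) l2 * steer Ls 0 (fR p q) l3" for p q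
      unfolding v0_def kron3_eval using dec l by simp
    have st: "kron3 Ls Lt (steer Ls l1 (fT p)) (steer Lt l2 (fd p q)) (steer Ls l3 (fR p q)) i
        = v0 p q i * cnj (v0 p q (enc l1 l2 l3))" for p q
      unfolding v0e unfolding v0_def kron3_eval
      using steer_factor[OF l(1), of "fT p"] steer_factor[OF l(2), of "fd p q"] steer_factor[OF l(3), of "fR p q"]
      by (simp add: mult_ac)
    have de: "i div (T*S) < S" "(i mod (T*S)) div S < T" "i mod S < S"
      "i = (i div (T*S))*(T*S) + (((i mod (T*S)) div S)*S + i mod S)"
      using dec_enc_gen[OF i] by auto
    have un: "kron3 Ls Lt (unitvec Ls l1) (unitvec Lt l2) (unitvec Ls l3) i = idm i (enc l1 l2 l3)"
    proof (cases "i = enc l1 l2 l3")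
      case True
      then show ?thesis unfolding kron3_eval using dec l by (simp add: unitvec_def idm_def)
    next
      case False
      have "\<not> (i div (T*S) = l1 \<and> (i mod (T*S)) div S = l2 \<and> i mod S = l3)"
      proof
        assume h: "i div (T*S) = l1 \<and> (i mod (T*S)) div S = l2 \<and> i mod S = l3"
        then have "i = enc l1 l2 l3" using de(4) unfolding enc_def by simp
        then show False using False by simp
      qed
      then show ?thesis unfolding kron3_eval using False
        by (auto simp: unitvec_def idm_def S_def T_def)
    qed
    show ?thesis unfolding z_def Mdef' st un by simp
  qed
  have "Rv i j = mmult ((Ls + 1)^2 * (Lt + 1)) M M i j"
    if i: "i < (Ls + 1)^2 * (Lt + 1)" and j: "j < (Ls + 1)^2 * (Lt + 1)" for i j
  proof -
    have i': "i < S*(T*S)" and j': "j < S*(T*S)" using i j Neq by auto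
    have "Rv i j = (\<Sum>l1\<in>{0..Ls}. \<Sum>l2\<in>{0..Lt}. \<Sum>l3\<in>{0..Ls}.
               M i (enc l1 l2 l3) * M (enc l1 l2 l3) j)"
      unfolding Rv_def outer_def
      by (intro sum.cong refl) (simp add: zM[OF i'] zM[OF j'] Msym)
    also have "\<dots> = (\<Sum>l1<S. \<Sum>l2<T. \<Sum>l3<S. M i (l1*(T*S) + (l2*S + l3)) * M (l1*(T*S) + (l2*S + l3)) j)"
      unfolding ivl S_def T_def enc_def by simp
    also have "\<dots> = (\<Sum>k<S*(T*S). M i k * M k j)"
      by (simp add: sum_split_mult)
    finally show ?thesis unfolding mmult_def Neq .
  qed
  then show ?thesis by (intro exI[of _ 1]) simp
qed

end
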